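(* The functor $\mathcal M_{\max}$ is (admits the structure of) a lax monoidal functor from $(\mathbf{Ord},\times,(\mathbf 1,=))$ to $(\mathbf{Ord},\times,(\mathbf 1,=))$.
   Context: $\mathbf{Ord}$ is the category of posets and monotone maps, with the cartesian product $\times$ (product order) and the one-point poset $\mathbf 1$ as monoidal structure. For a poset $(X,\le_X)$, $\mathcal M(X)$ is the set of nonempty finite subsets of $X$ whose elements are pairwise incomparable, ordered by $S\le_{\mathcal M(X)}T$ iff every $x\in S$ has some $y\in T$ with $x\le_X y$. For $S\subseteq X$, $S^{\circ}$ is the set of maximal elements of $S$. The functor $\mathcal M_{\max}:\mathbf{Ord}\to\mathbf{Ord}$ is $\mathcal M_{\max}(X)=(\mathcal M(X),\le_{\mathcal M(X)})$, $\mathcal M_{\max}(f)(S)=(f(S))^{\circ}$. *)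

theory Defs
  imports Main
begin

text \<open>Objects of Ord: a carrier set together with a partial order on it.
  Morphisms: monotone maps between carriers (compared extensionally on carriers).\<close>

definition poset :: "'a set \<Rightarrow> ('a \<Rightarrow> 'a \<Rightarrow> bool) \<Rightarrow> bool" where
  "poset X le \<longleftrightarrow>
     (\<forall>x\<in>X. le x x) \<and>
     (\<forall>x\<in>X. \<forall>y\<in>X. le x y \<and> le y x \<longrightarrow> x = y) \<and>
     (\<forall>x\<in>X. \<forall>y\<in>X. \<forall>z\<in>X. le x y \<and> le y z \<longrightarrow> le x z)"

definition monotone_map ::
  "'a set \<Rightarrow> ('a \<Rightarrow> 'a \<Rightarrow> bool) \<Rightarrow> 'b set \<Rightarrow> ('b \<Rightarrow> 'b \<Rightarrow> bool) \<Rightarrow> ('a \<Rightarrow> 'b) \<Rightarrow> bool" where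
  "monotone_map X leX Y leY f \<longleftrightarrow>
     (\<forall>x\<in>X. f x \<in> Y) \<and> (\<forall>x\<in>X. \<forall>y\<in>X. leX x y \<longrightarrow> leY (f x) (f y))"

definition prod_le :: "('a \<Rightarrow> 'a \<Rightarrow> bool) \<Rightarrow> ('b \<Rightarrow> 'b \<Rightarrow> bool) \<Rightarrow> 'a \<times> 'b \<Rightarrow> 'a \<times> 'b \<Rightarrow> bool" where
  "prod_le leX leY p q \<longleftrightarrow> leX (fst p) (fst q) \<and> leY (snd p) (snd q)"

definition unit_le :: "unit \<Rightarrow> unit \<Rightarrow> bool" where
  "unit_le x y \<longleftrightarrow> x = y"

definition assoc_map :: "('a \<times> 'b) \<times> 'c \<Rightarrow> 'a \<times> ('b \<times> 'c)" where
  "assoc_map p = (fst (fst p), (snd (fst p), snd p))"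

definition lunit_map :: "unit \<times> 'a \<Rightarrow> 'a" where
  "lunit_map p = snd p"

definition runit_map :: "'a \<times> unit \<Rightarrow> 'a" where
  "runit_map p = fst p"

definition Mset :: "'a set \<Rightarrow> ('a \<Rightarrow> 'a \<Rightarrow> bool) \<Rightarrow> 'a set set" where
  "Mset X le = {S. S \<subseteq> X \<and> finite S \<and> S \<noteq> {} \<and>
                   (\<forall>x\<in>S. \<forall>y\<in>S. x \<noteq> y \<longrightarrow> \<not> le x y \<and> \<not> le y x)}"

definition Mle :: "('a \<Rightarrow> 'a \<Rightarrow> bool) \<Rightarrow> 'a set \<Rightarrow> 'a set \<Rightarrow> bool" where
  "Mle le S T \<longleftrightarrow> (\<forall>x\<in>S. \<exists>y\<in>T. le x y)"

definition maxel :: "('a \<Rightarrow> 'a \<Rightarrow> bool) \<Rightarrow> 'a set \<Rightarrow> 'a set" where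
  "maxel le S = {x \<in> S. \<not> (\<exists>y\<in>S. le x y \<and> y \<noteq> x)}"

definition Mmax_map :: "('b \<Rightarrow> 'b \<Rightarrow> bool) \<Rightarrow> ('a \<Rightarrow> 'b) \<Rightarrow> 'a set \<Rightarrow> 'b set" where
  "Mmax_map leY f S = maxel leY (f ` S)"

definition Mmu :: "'a set \<Rightarrow> 'b set \<Rightarrow> ('a \<times> 'b) set" where
  "Mmu S T = S \<times> T"

definition Meps :: "unit \<Rightarrow> unit set" where
  "Meps u = {u}"

end

theory Submission
  imports Defs
begin


definition antic :: "('a \<Rightarrow> 'a \<Rightarrow> bool) \<Rightarrow> 'a set \<Rightarrow> bool" where
  "antic le S \<longleftrightarrow> (\<forall>x\<in>S. \<forall>y\<in>S. x \<noteq> y \<longrightarrow> \<not> le x y \<and> \<not> le y x)"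

lemma Mset_iff: "S \<in> Mset X le \<longleftrightarrow> S \<subseteq> X \<and> finite S \<and> S \<noteq> {} \<and> antic le S"
  by (simp add: Mset_def antic_def)

lemma maxel_antic: "antic le A \<Longrightarrow> maxel le A = A"
  by (auto simp: maxel_def antic_def)

lemma maxel_sub: "maxel le A \<subseteq> A" by (auto simp: maxel_def)
lemma maxel_mem: "x \<in> maxel le A \<Longrightarrow> x \<in> A" by (simp add: maxel_def)

lemma maxel_is_antic: "antic le (maxel le A)"
  by (auto simp: maxel_def antic_def)

lemma poset_refl: "poset X le \<Longrightarrow> x \<in> X \<Longrightarrow> le x x"
  unfolding poset_def by (drule conjunct1) (erule bspec)
lemma poset_antisym: "poset X le \<Longrightarrow> x \<in> X \<Longrightarrow> y \<in> X \<Longrightarrow> le x y \<Longrightarrow> le y x \<Longrightarrow> x = y"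
  unfolding poset_def by (drule conjunct2, drule conjunct1) (drule bspec, assumption, drule bspec, assumption, erule mp, rule conjI)
lemma poset_trans: "poset X le \<Longrightarrow> x \<in> X \<Longrightarrow> y \<in> X \<Longrightarrow> z \<in> X \<Longrightarrow> le x y \<Longrightarrow> le y z \<Longrightarrow> le x z"
  unfolding poset_def by (drule conjunct2, drule conjunct2) (drule bspec, assumption, drule bspec, assumption, drule bspec, assumption, erule mp, rule conjI)

lemma max_above:
  assumes po: "poset X le" and A: "finite A" "A \<subseteq> X" "x \<in> A"
  shows "\<exists>m\<in>maxel le A. le x m"
proof -
  have "x \<in> A \<and> le x x" using A poset_refl[OF po] by blast
  then obtain m where m: "m \<in> A \<and> le x m" and mn: "\<forall>y. y\<in>A \<and> le x y \<longrightarrow> card {z\<in>A. le m z} \<le> card {z\<in>A. le y z}"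
    using ex_has_least_nat[of "\<lambda>y. y\<in>A \<and> le x y" x "\<lambda>y. card {z\<in>A. le y z}"] by blast
  have "m \<in> maxel le A"
  proof (rule ccontr)
    assume "m \<notin> maxel le A"
    then obtain y where y: "y\<in>A" "le m y" "y\<noteq>m" using m by (auto simp: maxel_def)
    have X: "y \<in> X" "m \<in> X" "x \<in> X" using y m A by auto
    have "{z\<in>A. le y z} \<subseteq> {z\<in>A. le m z}"
      using poset_trans[OF po _ X(1)] A y(2) X(2) by blast
    moreover have "m \<in> {z\<in>A. le m z}" using poset_refl[OF po X(2)] m by blast
    moreover have "m \<notin> {z\<in>A. le y z}" using poset_antisym[OF po X(1) X(2)] y by blast
    ultimately have "{z\<in>A. le y z} \<subset> {z\<in>A. le m z}" by blast
    hence "card {z\<in>A. le y z} < card {z\<in>A. le m z}" using A by (simp add: psubset_card_mono)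
    moreover have "le x y" using poset_trans[OF po X(3) X(2) X(1)] y m by blast
    ultimately show False using mn y by fastforce
  qed
  thus ?thesis using m by blast
qed

lemma maxel_ne: "poset X le \<Longrightarrow> finite A \<Longrightarrow> A \<subseteq> X \<Longrightarrow> A \<noteq> {} \<Longrightarrow> maxel le A \<noteq> {}"
  using max_above by fastforce

lemma Mmax_in:
  assumes "poset X' leX'" "monotone_map X leX X' leX' f" "S \<in> Mset X leX"
  shows "Mmax_map leX' f S \<in> Mset X' leX'"
proof -
  have a: "f ` S \<subseteq> X'" using assms by (auto simp: monotone_map_def Mset_iff)
  have b: "finite (f ` S)" "f ` S \<noteq> {}" using assms by (auto simp: Mset_iff)
  have 1: "maxel leX' (f ` S) \<subseteq> X'" using a maxel_sub[of leX' "f ` S"] by (rule order_trans[rotated])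
  have 2: "finite (maxel leX' (f ` S))" using b(1) maxel_sub by (rule finite_subset[rotated])
  show ?thesis unfolding Mset_iff Mmax_map_def
    using 1 2 maxel_is_antic maxel_ne[OF assms(1) b(1) a b(2)] by simp
qed

lemma Mposet: assumes po: "poset X le" shows "poset (Mset X le) (Mle le)"
  unfolding poset_def
proof (intro conjI ballI impI)
  fix S assume "S \<in> Mset X le" thus "Mle le S S" using poset_refl[OF po] by (auto simp: Mle_def Mset_iff)
next
  fix S T assume S: "S \<in> Mset X le" and T: "T \<in> Mset X le" and st: "Mle le S T \<and> Mle le T S"
  have h: "x \<in> T" if a: "x \<in> S" "Mle le S T" "Mle le T S" "S \<in> Mset X le" "T \<in> Mset X le" for x S T
  proof -
    obtain y where y: "y \<in> T" "le x y" using a(1,2) unfolding Mle_def by blast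
    obtain z where z: "z \<in> S" "le y z" using a(3) y unfolding Mle_def by blast
    have X: "x \<in> X" "y \<in> X" "z \<in> X" using a y z by (auto simp: Mset_iff)
    have "le x z" using poset_trans[OF po X] y z by blast
    hence "x = z" using a z by (auto simp: Mset_iff antic_def)
    hence "x = y" using poset_antisym[OF po X(1,2)] y z by blast
    thus ?thesis using y by simp
  qed
  show "S = T" using h[OF _ _ _ S T] h[OF _ _ _ T S] st by blast
next
  fix S T U assume S: "S \<in> Mset X le" and T: "T \<in> Mset X le" and U: "U \<in> Mset X le"
    and st: "Mle le S T \<and> Mle le T U"
  show "Mle le S U" unfolding Mle_def
  proof
    fix x assume "x \<in> S"
    then obtain y where y: "y \<in> T" "le x y" using st by (auto simp: Mle_def)
    obtain z where z: "z \<in> U" "le y z" using st y by (auto simp: Mle_def)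
    have "x \<in> X" "y \<in> X" "z \<in> X" using \<open>x\<in>S\<close> y z S T U by (auto simp: Mset_iff)
    thus "\<exists>z\<in>U. le x z" using poset_trans[OF po] y z by blast
  qed
qed

lemma antic_prod: "antic l1 A \<Longrightarrow> antic l2 B \<Longrightarrow> antic (prod_le l1 l2) (A \<times> B)"
  unfolding antic_def prod_le_def by fastforce

lemma maxel_prod:
  assumes "poset X1 l1" "poset X2 l2" "A \<subseteq> X1" "B \<subseteq> X2"
  shows "maxel (prod_le l1 l2) (A \<times> B) = maxel l1 A \<times> maxel l2 B"
proof
  show "maxel (prod_le l1 l2) (A \<times> B) \<subseteq> maxel l1 A \<times> maxel l2 B"
  proof
    fix p assume mp: "p \<in> maxel (prod_le l1 l2) (A \<times> B)"
    obtain a b where p: "p = (a, b)" by fastforce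
    have m: "(a, b) \<in> maxel (prod_le l1 l2) (A \<times> B)" using mp p by simp
    hence ab: "a \<in> A" "b \<in> B" by (auto simp: maxel_def)
    have "l1 a a" "l2 b b" using ab assms poset_refl by (metis subsetD)+
    have "a \<in> maxel l1 A" using m ab \<open>l2 b b\<close>
      unfolding maxel_def prod_le_def by fastforce
    moreover have "b \<in> maxel l2 B" using m ab \<open>l1 a a\<close>
      unfolding maxel_def prod_le_def by fastforce
    ultimately show "p \<in> maxel l1 A \<times> maxel l2 B" using p by simp
  qed
next
  show "maxel l1 A \<times> maxel l2 B \<subseteq> maxel (prod_le l1 l2) (A \<times> B)"
    unfolding maxel_def prod_le_def by auto
qed

lemma maxelD: "z \<in> maxel le A \<Longrightarrow> y \<in> A \<Longrightarrow> le z y \<Longrightarrow> y = z"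
  unfolding maxel_def by blast

lemma maxelI: "z \<in> A \<Longrightarrow> (\<And>y. y \<in> A \<Longrightarrow> le z y \<Longrightarrow> y = z) \<Longrightarrow> z \<in> maxel le A"
  unfolding maxel_def by blast

lemma comp_max:
  assumes pZ: "poset Z leZ" and h: "monotone_map X' le' Z leZ h" and A: "finite A" "A \<subseteq> X'"
    and pX: "poset X' le'"
  shows "maxel leZ (h ` A) = maxel leZ (h ` maxel le' A)"
proof -
  have hm: "leZ (h a) (h m)" if "a \<in> A" "m \<in> A" "le' a m" for a m
    using h that A unfolding monotone_map_def by blast
  have hA: "h ` A \<subseteq> Z" using h A unfolding monotone_map_def by blast
  have sub: "h ` maxel le' A \<subseteq> h ` A" using maxel_sub[of le' A] by (rule image_mono)
  show ?thesis
  proof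
  show "maxel leZ (h ` A) \<subseteq> maxel leZ (h ` maxel le' A)"
  proof
    fix z assume z: "z \<in> maxel leZ (h ` A)"
    then obtain a where a: "a \<in> A" "z = h a" by (blast dest: maxel_mem)
    obtain m where m: "m \<in> maxel le' A" "le' a m" using max_above[OF pX A a(1)] by blast
    have mA: "m \<in> A" using m(1) by (rule maxel_mem)
    have "h m = z" using maxelD[OF z _ ] hm[OF a(1) mA m(2)] a(2) mA by blast
    hence zz: "z \<in> h ` maxel le' A" using m by blast
    show "z \<in> maxel leZ (h ` maxel le' A)"
      by (rule maxelI[OF zz]) (rule maxelD[OF z], use sub in blast, assumption)
  qed
next
  show "maxel leZ (h ` maxel le' A) \<subseteq> maxel leZ (h ` A)"
  proof
    fix z assume z: "z \<in> maxel leZ (h ` maxel le' A)"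
    hence zA: "z \<in> h ` A" using sub by (blast dest: maxel_mem)
    show "z \<in> maxel leZ (h ` A)"
    proof (rule maxelI[OF zA])
      fix w assume w: "w \<in> h ` A" and zw: "leZ z w"
      obtain a where a: "a \<in> A" "w = h a" using w by blast
      obtain m where m: "m \<in> maxel le' A" "le' a m" using max_above[OF pX A a(1)] by blast
      have mA: "m \<in> A" using m(1) by (rule maxel_mem)
      have wm: "leZ w (h m)" using hm[OF a(1) mA m(2)] a(2) by simp
      have ZZ: "z \<in> Z" "w \<in> Z" "h m \<in> Z" using zA w mA hA by auto
      have zm: "leZ z (h m)" using poset_trans[OF pZ ZZ zw wm] .
      have "h m = z" using maxelD[OF z _ zm] m(1) by blast
      thus "w = z" using poset_antisym[OF pZ ZZ(2,1)] wm zw by simp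
    qed
  qed
qed
qed

lemma Mmax_mono:
  assumes pX': "poset X' leX'" and f: "monotone_map X leX X' leX' f"
  shows "monotone_map (Mset X leX) (Mle leX) (Mset X' leX') (Mle leX') (Mmax_map leX' f)"
  unfolding monotone_map_def
proof (intro conjI ballI impI)
  fix S assume "S \<in> Mset X leX" thus "Mmax_map leX' f S \<in> Mset X' leX'" using Mmax_in[OF pX' f] by blast
next
  fix S T assume S: "S \<in> Mset X leX" and T: "T \<in> Mset X leX" and st: "Mle leX S T"
  show "Mle leX' (Mmax_map leX' f S) (Mmax_map leX' f T)" unfolding Mle_def Mmax_map_def
  proof
    fix x assume "x \<in> maxel leX' (f ` S)"
    then obtain s where s: "s \<in> S" "x = f s" by (auto simp: maxel_def)
    obtain t where t: "t \<in> T" "leX s t" using st s unfolding Mle_def by blast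
    have sX: "s \<in> X" "t \<in> X" using s t S T by (auto simp: Mset_iff)
    have fst: "leX' (f s) (f t)" using f sX t unfolding monotone_map_def by blast
    have fT: "finite (f ` T)" "f ` T \<subseteq> X'" using T f by (auto simp: Mset_iff monotone_map_def)
    obtain m where m: "m \<in> maxel leX' (f ` T)" "leX' (f t) m" using max_above[OF pX' fT] t by blast
    have "m \<in> X'" using maxel_mem[OF m(1)] fT by blast
    moreover have "f s \<in> X'" "f t \<in> X'" using f sX unfolding monotone_map_def by auto
    ultimately have "leX' (f s) m" using poset_trans[OF pX'] fst m by blast
    thus "\<exists>y\<in>maxel leX' (f ` T). leX' x y" using m s by blast
  qed
qed


theorem propositionD11:
  fixes X :: "'a set" and leX :: "'a \<Rightarrow> 'a \<Rightarrow> bool"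
    and Y :: "'b set" and leY :: "'b \<Rightarrow> 'b \<Rightarrow> bool"
    and Z :: "'c set" and leZ :: "'c \<Rightarrow> 'c \<Rightarrow> bool"
    and X' :: "'d set" and leX' :: "'d \<Rightarrow> 'd \<Rightarrow> bool"
    and Y' :: "'e set" and leY' :: "'e \<Rightarrow> 'e \<Rightarrow> bool"
    and f :: "'a \<Rightarrow> 'd" and g :: "'b \<Rightarrow> 'e" and h :: "'d \<Rightarrow> 'c"
  assumes "poset X leX" and "poset Y leY" and "poset Z leZ"
    and "poset X' leX'" and "poset Y' leY'"
    and "monotone_map X leX X' leX' f" and "monotone_map Y leY Y' leY' g"
    and "monotone_map X' leX' Z leZ h"
  shows
    \<comment> \<open>M_max is a functor Ord \<rightarrow> Ord\<close>
    "poset (Mset X leX) (Mle leX)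
     \<and> monotone_map (Mset X leX) (Mle leX) (Mset X' leX') (Mle leX') (Mmax_map leX' f)
     \<and> (\<forall>S\<in>Mset X leX. Mmax_map leX id S = S)
     \<and> (\<forall>S\<in>Mset X leX. Mmax_map leZ (h \<circ> f) S = Mmax_map leZ h (Mmax_map leX' f S))
     \<comment> \<open>the structure maps are morphisms of Ord\<close>
     \<and> monotone_map (UNIV :: unit set) unit_le (Mset UNIV unit_le) (Mle unit_le) Meps
     \<and> monotone_map (Mset X leX \<times> Mset Y leY) (prod_le (Mle leX) (Mle leY))
         (Mset (X \<times> Y) (prod_le leX leY)) (Mle (prod_le leX leY)) (\<lambda>p. Mmu (fst p) (snd p))
     \<comment> \<open>naturality of \<mu>\<close>
     \<and> (\<forall>S\<in>Mset X leX. \<forall>T\<in>Mset Y leY.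
          Mmu (Mmax_map leX' f S) (Mmax_map leY' g T)
          = Mmax_map (prod_le leX' leY') (\<lambda>p. (f (fst p), g (snd p))) (Mmu S T))
     \<comment> \<open>associativity coherence\<close>
     \<and> (\<forall>S\<in>Mset X leX. \<forall>T\<in>Mset Y leY. \<forall>U\<in>Mset Z leZ.
          Mmax_map (prod_le leX (prod_le leY leZ)) assoc_map (Mmu (Mmu S T) U)
          = Mmu S (Mmu T U))
     \<comment> \<open>unit coherences\<close>
     \<and> (\<forall>S\<in>Mset X leX. Mmax_map leX lunit_map (Mmu (Meps ()) S) = S)
     \<and> (\<forall>S\<in>Mset X leX. Mmax_map leX runit_map (Mmu S (Meps ())) = S)"
  proof -
  note a = assms
  have id: "\<forall>S\<in>Mset X leX. Mmax_map leX id S = S"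
    by (auto simp: Mmax_map_def Mset_iff maxel_antic)
  have comp: "\<forall>S\<in>Mset X leX. Mmax_map leZ (h \<circ> f) S = Mmax_map leZ h (Mmax_map leX' f S)"
  proof
    fix S assume S: "S \<in> Mset X leX"
    have "finite (f ` S)" "f ` S \<subseteq> X'" using S a(6) by (auto simp: Mset_iff monotone_map_def)
    thus "Mmax_map leZ (h \<circ> f) S = Mmax_map leZ h (Mmax_map leX' f S)"
      unfolding Mmax_map_def image_comp[symmetric] using comp_max[OF a(3) a(8) _ _ a(4)] by blast
  qed
  have eps: "monotone_map (UNIV :: unit set) unit_le (Mset UNIV unit_le) (Mle unit_le) Meps"
    by (auto simp: monotone_map_def Mset_def Meps_def Mle_def unit_le_def)
  have mu: "monotone_map (Mset X leX \<times> Mset Y leY) (prod_le (Mle leX) (Mle leY))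
         (Mset (X \<times> Y) (prod_le leX leY)) (Mle (prod_le leX leY)) (\<lambda>p. Mmu (fst p) (snd p))"
    unfolding monotone_map_def
  proof (intro conjI ballI impI)
    fix p assume "p \<in> Mset X leX \<times> Mset Y leY"
    thus "Mmu (fst p) (snd p) \<in> Mset (X \<times> Y) (prod_le leX leY)"
      by (auto simp: Mset_iff Mmu_def intro!: antic_prod)
  next
    fix p q assume "prod_le (Mle leX) (Mle leY) p q"
    thus "Mle (prod_le leX leY) (Mmu (fst p) (snd p)) (Mmu (fst q) (snd q))"
      unfolding Mle_def prod_le_def Mmu_def by fastforce
  qed
  have nat: "\<forall>S\<in>Mset X leX. \<forall>T\<in>Mset Y leY.
          Mmu (Mmax_map leX' f S) (Mmax_map leY' g T)
          = Mmax_map (prod_le leX' leY') (\<lambda>p. (f (fst p), g (snd p))) (Mmu S T)"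
  proof (intro ballI)
    fix S T assume S: "S \<in> Mset X leX" and T: "T \<in> Mset Y leY"
    have im: "(\<lambda>p. (f (fst p), g (snd p))) ` (S \<times> T) = f ` S \<times> g ` T" by (force simp: image_iff)
    have "f ` S \<subseteq> X'" "g ` T \<subseteq> Y'" using S T a(6,7) by (auto simp: Mset_iff monotone_map_def)
    thus "Mmu (Mmax_map leX' f S) (Mmax_map leY' g T)
          = Mmax_map (prod_le leX' leY') (\<lambda>p. (f (fst p), g (snd p))) (Mmu S T)"
      unfolding Mmu_def Mmax_map_def im using maxel_prod[OF a(4,5)] by simp
  qed
  have asc: "\<forall>S\<in>Mset X leX. \<forall>T\<in>Mset Y leY. \<forall>U\<in>Mset Z leZ.
          Mmax_map (prod_le leX (prod_le leY leZ)) assoc_map (Mmu (Mmu S T) U)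
          = Mmu S (Mmu T U)"
  proof (intro ballI)
    fix S T U assume S: "S \<in> Mset X leX" and T: "T \<in> Mset Y leY" and U: "U \<in> Mset Z leZ"
    have im: "assoc_map ` ((S \<times> T) \<times> U) = S \<times> (T \<times> U)"
      by (force simp: assoc_map_def image_iff)
    have "antic (prod_le leX (prod_le leY leZ)) (S \<times> (T \<times> U))"
      using S T U by (intro antic_prod) (auto simp: Mset_iff)
    thus "Mmax_map (prod_le leX (prod_le leY leZ)) assoc_map (Mmu (Mmu S T) U)
          = Mmu S (Mmu T U)"
      unfolding Mmax_map_def Mmu_def im by (simp add: maxel_antic)
  qed
  have lu: "\<forall>S\<in>Mset X leX. Mmax_map leX lunit_map (Mmu (Meps ()) S) = S"
  proof
    fix S assume S: "S \<in> Mset X leX"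
    have "lunit_map ` ({()} \<times> S) = S" by (force simp: lunit_map_def image_iff)
    thus "Mmax_map leX lunit_map (Mmu (Meps ()) S) = S"
      using S by (simp add: Mmax_map_def Mmu_def Meps_def Mset_iff maxel_antic)
  qed
  have ru: "\<forall>S\<in>Mset X leX. Mmax_map leX runit_map (Mmu S (Meps ())) = S"
  proof
    fix S assume S: "S \<in> Mset X leX"
    have "runit_map ` (S \<times> {()}) = S" by (force simp: runit_map_def image_iff)
    thus "Mmax_map leX runit_map (Mmu S (Meps ())) = S"
      using S by (simp add: Mmax_map_def Mmu_def Meps_def Mset_iff maxel_antic)
  qed
  show ?thesis
    apply (intro conjI)
    by (fact Mposet[OF a(1)] Mmax_mono[OF a(4) a(6)] id comp eps mu nat asc lu ru)+
qed

end
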